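(* Let $\alpha_1,\alpha_2>0$ satisfy $\alpha_1-\alpha_2\ge e(e-1)$. Let $p$ be analytic in $\mathbb{D}$ with $p(0)=1$. If $$1+\alpha_1 zp'(z)+\alpha_2 z^2p''(z)\prec e^z,$$ then $p(z)\prec e^z$.
   Context: $\mathbb{D}$ is the open unit disk. For $g,h$ analytic in $\mathbb{D}$, $g\prec h$ means there is an analytic $w:\mathbb{D}\to\mathbb{D}$ with $w(0)=0$ and $g=h\circ w$. *)

theory Defs
  imports "HOL-Complex_Analysis.Complex_Analysis"
begin

definition subordinate :: "(complex \<Rightarrow> complex) \<Rightarrow> (complex \<Rightarrow> complex) \<Rightarrow> bool"
  (infix "\<prec>\<^sub>D" 50) where
  "g \<prec>\<^sub>D h \<longleftrightarrow>
     (\<exists>w. w analytic_on ball 0 1 \<and> w ` ball 0 1 \<subseteq> ball 0 1 \<and> w 0 = 0 \<and>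
          (\<forall>z\<in>ball 0 1. g z = h (w z)))"

end

theory Submission
  imports Defs
begin

lemma exp_sub1_bound:
  fixes u :: complex assumes "norm u \<le> 1"
  shows "norm (exp u - 1) \<le> (exp 1 - 1) * norm u"
proof -
  have s: "(\<lambda>n. u^Suc n /\<^sub>R fact (Suc n)) sums (exp u - 1)"
    using exp_converges[of u] sums_Suc_iff[of "\<lambda>n. u^n /\<^sub>R fact n" "exp u - 1"] by simp
  have s1: "(\<lambda>n. 1 / fact (Suc n) :: real) sums (exp 1 - 1)"
    using exp_converges[of "1::real"] sums_Suc_iff[of "\<lambda>n. (1::real)^n /\<^sub>R fact n" "exp 1 - 1"]
    by (simp add: divide_inverse)
  have s2: "(\<lambda>n. norm u * (1 / fact (Suc n) :: real)) sums (norm u * (exp 1 - 1))"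
    by (rule sums_mult[OF s1])
  have le: "norm (u^Suc n /\<^sub>R fact (Suc n)) \<le> norm u * (1 / fact (Suc n))" for n
  proof -
    have "norm u ^ n \<le> 1" using assms by (simp add: power_le_one)
    then have "norm u ^ Suc n \<le> norm u" by (simp add: mult_left_le)
    then have "norm u ^ Suc n / fact (Suc n) \<le> norm u / fact (Suc n)"
      by (simp add: divide_right_mono del: power_Suc)
    then show ?thesis by (simp add: norm_power divide_inverse mult.commute del: power_Suc fact_Suc)
  qed
  have "norm (exp u - 1) = norm (\<Sum>n. u^Suc n /\<^sub>R fact (Suc n))" using s sums_unique by metis
  also have "\<dots> \<le> (\<Sum>n. norm u * (1 / fact (Suc n) :: real))"
    by (rule norm_suminf_le[OF le]) (use s2 in \<open>simp add: sums_summable\<close>)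
  also have "\<dots> = (exp 1 - 1) * norm u" using s2 sums_unique by (metis mult.commute)
  finally show ?thesis .
qed

lemma radial_max:
  fixes R :: "complex \<Rightarrow> complex"
  assumes hol: "R holomorphic_on ball 0 1" and z0: "norm z0 < 1"
    and mx: "\<And>t. 0 \<le> t \<Longrightarrow> t \<le> 1 \<Longrightarrow> norm (R (of_real t * z0)) \<le> norm (R z0)"
  shows "Re (cnj (R z0) * (z0 * deriv R z0)) \<ge> 0"
proof (rule ccontr)
  define c where "c = R z0"
  define d where "d = z0 * deriv R z0"
  assume neg: "\<not> Re (cnj (R z0) * (z0 * deriv R z0)) \<ge> 0"
  have DR: "(R has_field_derivative deriv R z0) (at z0)"
    using holomorphic_derivI[OF hol open_ball, of z0 UNIV] z0 by simp
  have Dc: "((\<lambda>s. R (s * z0)) has_field_derivative d) (at (of_real 1))"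
  proof -
    have "((\<lambda>s. s * z0) has_field_derivative z0) (at 1)"
      using DERIV_cmult_right[OF DERIV_ident, of z0] by simp
    from DERIV_chain2[OF _ this, of R "deriv R z0"] DR show ?thesis
      by (simp add: d_def mult.commute)
  qed
  have Dv: "((\<lambda>t. R (of_real t * z0)) has_vector_derivative d) (at 1)"
    using has_vector_derivative_real_field[OF Dc] by simp
  have Dh: "((\<lambda>t. R (of_real t * z0)) has_derivative (\<lambda>h. h *\<^sub>R d)) (at 1)"
    using Dv by (simp add: has_vector_derivative_def)
  have Dg: "((\<lambda>t. inner (R (of_real t * z0)) (R (of_real t * z0))) has_real_derivative (2 * inner c d)) (at 1)"
    unfolding has_field_derivative_def
    using has_derivative_inner[OF Dh Dh]
    by (simp add: c_def algebra_simps inner_commute mult_commute_abs)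
  have "inner c d = Re (cnj (R z0) * (z0 * deriv R z0))"
    by (simp add: c_def d_def inner_complex_def)
  then have "2 * inner c d < 0" using neg by simp
  from DERIV_neg_dec_left[OF Dg this] obtain e :: real where e: "e > 0"
    and dec: "\<And>h. h > 0 \<Longrightarrow> h < e \<Longrightarrow> inner (R (of_real 1 * z0)) (R (of_real 1 * z0)) < inner (R (of_real (1 - h) * z0)) (R (of_real (1 - h) * z0))"
    by blast
  define h where "h = min (e/2) 1"
  have h: "h > 0" "h < e" "h \<le> 1" using e by (auto simp: h_def)
  have "norm (R (of_real (1 - h) * z0)) \<le> norm (R z0)" using mx[of "1 - h"] h by simp
  then have "inner (R (of_real (1 - h) * z0)) (R (of_real (1 - h) * z0)) \<le> inner (R z0) (R z0)"
    by (simp add: power2_norm_eq_inner[symmetric] power_mono)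
  with dec[OF h(1) h(2)] show False by simp
qed

lemma stepB:
  fixes c d :: complex and a1 a2 K :: real
  assumes "a1 > 0" "a2 > 0" "norm (of_real a1 * c + of_real a2 * d) \<le> K"
    and "Re (cnj c * d) \<ge> 0"
  shows "a1 * norm c \<le> K"
proof (cases "c = 0")
  case True
  have "0 \<le> K" using assms(3) norm_ge_zero[of "of_real a1 * c + of_real a2 * d"] by linarith
  then show ?thesis using True by simp
next
  case False
  have "Re (cnj c * (of_real a1 * c + of_real a2 * d)) = a1 * norm c ^ 2 + a2 * Re (cnj c * d)"
    using cmod_power2[of c] by (simp add: algebra_simps power2_eq_square)
  moreover have "Re (cnj c * (of_real a1 * c + of_real a2 * d)) \<le> norm c * K"
  proof -
    have "Re (cnj c * (of_real a1 * c + of_real a2 * d)) \<le> norm (cnj c * (of_real a1 * c + of_real a2 * d))"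
      by (rule complex_Re_le_cmod)
    also have "\<dots> \<le> norm c * K" using assms(3) by (simp add: norm_mult mult_left_mono)
    finally show ?thesis .
  qed
  ultimately have "a1 * norm c ^ 2 \<le> norm c * K"
    using assms(2,4) by (smt (verit) mult_nonneg_nonneg)
  then have "norm c * (a1 * norm c) \<le> norm c * K" by (simp add: power2_eq_square algebra_simps)
  then show ?thesis using False by simp
qed

theorem theorem4p10:
  fixes \<alpha>1 \<alpha>2 :: real and p :: "complex \<Rightarrow> complex"
  assumes "\<alpha>1 > 0" and "\<alpha>2 > 0"
    and "\<alpha>1 - \<alpha>2 \<ge> exp 1 * (exp 1 - 1)"
    and "p analytic_on ball 0 1" and "p 0 = 1"
    and "(\<lambda>z. 1 + of_real \<alpha>1 * z * deriv p z + of_real \<alpha>2 * z\<^sup>2 * deriv (deriv p) z) \<prec>\<^sub>D exp"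
  shows "p \<prec>\<^sub>D exp"
proof -
  obtain w0 where w0an: "w0 analytic_on ball 0 1" and w0im: "w0 ` ball 0 1 \<subseteq> ball 0 1"
    and w00: "w0 0 = 0"
    and eq: "\<And>z. z \<in> ball 0 1 \<Longrightarrow> 1 + of_real \<alpha>1 * z * deriv p z + of_real \<alpha>2 * z\<^sup>2 * deriv (deriv p) z = exp (w0 z)"
    using assms(6) unfolding subordinate_def by blast
  define R where "R = deriv p"
  define E where "E = exp (1::real)"
  have E2: "E \<ge> 2" using exp_ge_add_one_self[of "1::real"] by (simp add: E_def)
  have holp: "p holomorphic_on ball 0 1" using assms(4) analytic_imp_holomorphic by blast
  have holR: "R holomorphic_on ball 0 1" unfolding R_def by (rule holomorphic_deriv[OF holp open_ball])
  have holw0: "w0 holomorphic_on ball 0 1" using w0an analytic_imp_holomorphic by blast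
  have schw: "norm (w0 z) \<le> norm z" if "norm z < 1" for z
    by (rule Schwarz_Lemma(1)[OF holw0 w00 _ that]) (use w0im in force)
  have A: "norm (z * (of_real \<alpha>1 * R z + of_real \<alpha>2 * (z * deriv R z))) \<le> (E - 1) * norm z"
    if "norm z < 1" for z
  proof -
    have "z * (of_real \<alpha>1 * R z + of_real \<alpha>2 * (z * deriv R z)) = exp (w0 z) - 1"
      using eq[of z] that by (simp add: R_def power2_eq_square algebra_simps)
    also have "norm \<dots> \<le> (E - 1) * norm (w0 z)"
      using exp_sub1_bound[of "w0 z"] schw[OF that] that by (simp add: E_def)
    also have "\<dots> \<le> (E - 1) * norm z" using schw[OF that] E2 by (simp add: mult_left_mono)
    finally show ?thesis .
  qed
  have B: "\<alpha>1 * norm (R z0) \<le> E - 1"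
    if "0 < norm z0" "norm z0 < 1" "Re (cnj (R z0) * (z0 * deriv R z0)) \<ge> 0" for z0
  proof (rule stepB[OF assms(1,2) _ that(3)])
    have "norm z0 * norm (of_real \<alpha>1 * R z0 + of_real \<alpha>2 * (z0 * deriv R z0)) \<le> norm z0 * (E - 1)"
      using A[OF that(2)] by (simp add: norm_mult mult.commute)
    then show "norm (of_real \<alpha>1 * R z0 + of_real \<alpha>2 * (z0 * deriv R z0)) \<le> E - 1"
      using that(1) by simp
  qed
  have C: "norm (R z) \<le> (E - 1) / \<alpha>1" if "norm z < 1" for z
  proof -
    define r where "r = max (norm z) (1/2)"
    have r: "0 < r" "r < 1" "norm z \<le> r" using that by (auto simp: r_def)
    have sub: "cball 0 r \<subseteq> ball 0 1" using r by auto
    have contR: "continuous_on (cball 0 r) R"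
      using holomorphic_on_imp_continuous_on[OF holomorphic_on_subset[OF holR sub]] .
    have "sphere (0::complex) r \<noteq> {}" using r by (simp add: sphere_eq_empty)
    moreover have "continuous_on (sphere 0 r) (\<lambda>x. norm (R x))"
      by (intro continuous_on_norm continuous_on_subset[OF contR]) auto
    ultimately obtain z0 where z0: "z0 \<in> sphere 0 r" and z0m: "\<And>y. y \<in> sphere 0 r \<Longrightarrow> norm (R y) \<le> norm (R z0)"
      using continuous_attains_sup[of "sphere 0 r" "\<lambda>x. norm (R x)"] by (auto simp: compact_sphere)
    have mm: "norm (R y) \<le> norm (R z0)" if "y \<in> cball 0 r" for y
    proof (rule maximum_modulus_frontier[of R "cball 0 r"])
      show "R holomorphic_on interior (cball 0 r)"
        by (rule holomorphic_on_subset[OF holR]) (use r in auto)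
      show "continuous_on (closure (cball 0 r)) R" using contR by simp
    qed (use z0m that r in \<open>auto simp: frontier_cball\<close>)
    have nz0: "norm z0 = r" using z0 by simp
    have "Re (cnj (R z0) * (z0 * deriv R z0)) \<ge> 0"
    proof (rule radial_max[OF holR])
      show "norm z0 < 1" using nz0 r by simp
      fix t :: real assume "0 \<le> t" "t \<le> 1"
      then have "norm (of_real t * z0) \<le> r" using nz0 r by (simp add: norm_mult mult_left_le_one_le)
      then show "norm (R (of_real t * z0)) \<le> norm (R z0)" by (intro mm) simp
    qed
    then have "\<alpha>1 * norm (R z0) \<le> E - 1" using B[of z0] nz0 r by simp
    then have "norm (R z0) \<le> (E - 1) / \<alpha>1" using assms(1) by (simp add: field_simps)
    moreover have "norm (R z) \<le> norm (R z0)" using mm r by simp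
    ultimately show ?thesis by linarith
  qed
  have a1: "\<alpha>1 \<ge> 2 * (E - 1)"
  proof -
    have "E * (E - 1) \<ge> 2 * (E - 1)" using E2 by (intro mult_right_mono) auto
    then show ?thesis using assms(2,3) by (simp add: E_def)
  qed
  have K: "(E - 1) / \<alpha>1 \<le> 1/2" using a1 assms(1) by (simp add: field_simps)
  have D: "norm (p z - 1) < 1/2" if "norm z < 1" for z
  proof -
    have "norm (p z - p 0) \<le> (E - 1) / \<alpha>1 * norm (z - 0)"
    proof (rule field_differentiable_bound[of "ball 0 1" p R])
      show "(p has_field_derivative R x) (at x within ball 0 1)" if "x \<in> ball 0 1" for x
        unfolding R_def by (rule holomorphic_derivI[OF holp open_ball that])
      show "norm (R x) \<le> (E - 1) / \<alpha>1" if "x \<in> ball 0 1" for x using C that by simp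
    qed (use that in auto)
    also have "\<dots> < 1/2"
    proof -
      have "(E - 1) / \<alpha>1 > 0" using E2 assms(1) by simp
      then have "(E - 1) / \<alpha>1 * norm z < (E - 1) / \<alpha>1" using that mult_strict_left_mono[of "norm z" 1 "(E - 1) / \<alpha>1"] by (simp del: times_divide_eq_left)
      then show ?thesis using K by (simp only: diff_zero)
    qed
    finally show ?thesis using assms(5) by simp
  qed
  have Re: "Re (p z) > 0" if "norm z < 1" for z
  proof -
    have "\<bar>Re (p z - 1)\<bar> \<le> norm (p z - 1)" by (rule abs_Re_le_cmod)
    then show ?thesis using D[OF that] by simp
  qed
  show ?thesis unfolding subordinate_def
  proof (intro exI conjI ballI)
    show "(\<lambda>z. Ln (p z)) analytic_on ball 0 1"
      unfolding analytic_on_open[OF open_ball]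
      by (rule holomorphic_on_Ln'[OF _ holp]) (use Re in \<open>force simp: complex_nonpos_Reals_iff\<close>)
    show "(\<lambda>z. Ln (p z)) ` ball 0 1 \<subseteq> ball 0 1"
    proof
      fix y assume "y \<in> (\<lambda>z. Ln (p z)) ` ball 0 1"
      then obtain z where z: "norm z < 1" and y: "y = Ln (p z)" by auto
      have "norm (Ln (1 + (p z - 1))) \<le> 2 * norm (p z - 1)" using norm_Ln_le D[OF z] by blast
      then have "norm y < 1" using D[OF z] y by simp
      then show "y \<in> ball 0 1" by simp
    qed
    show "Ln (p 0) = 0" using assms(5) by simp
    fix z :: complex assume "z \<in> ball 0 1"
    then have "Re (p z) > 0" using Re by simp
    then have "p z \<noteq> 0" by auto
    then show "p z = exp (Ln (p z))" by simp
  qed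
qed

end
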